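(* Let $U\subseteq\mathbb{C}^{n\times n}$ and $V\subseteq\mathbb{C}^{k\times k}$ be linear subspaces and $U\circledast V\subseteq\mathbb{C}^{nk\times nk}$ the span of all Kronecker products $A\circledast B$ with $A\in U$, $B\in V$. Let $\mu_U,\mu_V,\mu_{U\circledast V}$ be the structure tensors of the matrix-vector products $U\times\mathbb{C}^n\to\mathbb{C}^n$, $V\times\mathbb{C}^k\to\mathbb{C}^k$, $(U\circledast V)\times\mathbb{C}^{nk}\to\mathbb{C}^{nk}$. Suppose $\operatorname{rank}(\mu_U)=\dim U$, $\operatorname{rank}(\mu_V)=\dim V$, and that the images of $U\otimes\mathbb{C}^n\to\mathbb{C}^n$ and $V\otimes\mathbb{C}^k\to\mathbb{C}^k$ (induced by the matrix-vector products) are all of $\mathbb{C}^n$ and $\mathbb{C}^k$ respectively. Then $\operatorname{rank}(\mu_{U\circledast V})=\operatorname{rank}(\mu_U)\operatorname{rank}(\mu_V)$.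
   Context: $\circledast$ denotes the Kronecker product of matrices. Structure tensor of a bilinear map $\beta:U\times V\to W$: the unique $\mu_\beta\in U^*\otimes V^*\otimes W$ with $\beta(u,v)=\mu_\beta(u,v,\cdot)$. Rank: least number of decomposable tensors summing to the tensor. *)

theory Defs
  imports "HOL-Analysis.Analysis"
begin

text \<open>Complex matrices of size n x n are represented as vectors indexed by
  'n x 'n (so that the complex vector space structure (*s) of HOL-Analysis
  applies); entry (i,j) is A $ (i,j).\<close>

definition mat_vec :: "complex ^ ('n::finite \<times> 'n) \<Rightarrow> complex ^ 'n \<Rightarrow> complex ^ 'n" where
  "mat_vec A x = (\<chi> i. \<Sum>j\<in>UNIV. A $ (i, j) * x $ j)"

text \<open>Kronecker product: rows and columns of the result are indexed by 'n x 'k,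
  entry ((i,j),(i',j')) is A(i,i') * B(j,j').\<close>
definition kron :: "complex ^ ('n::finite \<times> 'n) \<Rightarrow> complex ^ ('k::finite \<times> 'k)
                    \<Rightarrow> complex ^ (('n \<times> 'k) \<times> ('n \<times> 'k))" where
  "kron A B = (\<chi> p. A $ (fst (fst p), fst (snd p)) * B $ (snd (fst p), snd (snd p)))"

definition kron_space :: "(complex ^ ('n::finite \<times> 'n)) set \<Rightarrow> (complex ^ ('k::finite \<times> 'k)) set
                          \<Rightarrow> (complex ^ (('n \<times> 'k) \<times> ('n \<times> 'k))) set" where
  "kron_space U V = vec.span {kron A B | A B. A \<in> U \<and> B \<in> V}"

text \<open>Rank of the structure tensor of a bilinear map beta : U x W -> Z, i.e. the least
  number of decomposable tensors f (x) g (x) z (f in U*, g in W*, z in Z) summing to it;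
  the decomposable tensor f (x) g (x) z corresponds to the map (u,w) |-> f u * g w *s z.
  Linear functionals on U are represented by (restrictions of) linear functionals on the
  ambient space, which is no loss since every linear functional on U extends.\<close>
definition tensor_rank :: "(complex ^ 'a::finite) set \<Rightarrow> (complex ^ 'a \<Rightarrow> complex ^ 'b::finite \<Rightarrow> complex ^ 'c::finite) \<Rightarrow> nat" where
  "tensor_rank U \<beta> = (LEAST r. \<exists>(f :: nat \<Rightarrow> complex ^ 'a \<Rightarrow> complex) (g :: nat \<Rightarrow> complex ^ 'b \<Rightarrow> complex)
       (z :: nat \<Rightarrow> complex ^ 'c).
       (\<forall>i<r. Vector_Spaces.linear (*s) (*) (f i) \<and> Vector_Spaces.linear (*s) (*) (g i)) \<and>
       (\<forall>u\<in>U. \<forall>w. \<beta> u w = (\<Sum>i<r. (f i u * g i w) *s z i)))"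

end

theory Submission imports Defs begin

definition outer :: "complex ^ 'm \<Rightarrow> complex ^ ('m::finite) \<Rightarrow> complex ^ ('m \<times> 'm)" where
  "outer a b = (\<chi> p. a $ fst p * b $ snd p)"

definition TR :: "(complex ^ 'a::finite) set \<Rightarrow> (complex ^ 'a \<Rightarrow> complex ^ 'b::finite \<Rightarrow> complex ^ 'c::finite) \<Rightarrow> nat \<Rightarrow> bool" where
  "TR U \<beta> r = (\<exists>(f :: nat \<Rightarrow> complex ^ 'a \<Rightarrow> complex) (g :: nat \<Rightarrow> complex ^ 'b \<Rightarrow> complex)
       (z :: nat \<Rightarrow> complex ^ 'c).
       (\<forall>i<r. Vector_Spaces.linear (*s) (*) (f i) \<and> Vector_Spaces.linear (*s) (*) (g i)) \<and>
       (\<forall>u\<in>U. \<forall>w. \<beta> u w = (\<Sum>i<r. (f i u * g i w) *s z i)))"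

lemma tensor_rank_TR: "tensor_rank U \<beta> = (LEAST r. TR U \<beta> r)"
  unfolding tensor_rank_def TR_def ..

lemma linI:
  assumes "\<And>x y. f (x + y) = f x + f y" "\<And>c x. f (c *s x) = c * f x"
  shows "Vector_Spaces.linear (*s) (*) (f :: complex ^ 'a::finite \<Rightarrow> complex)"
  using assms vec.vector_space_axioms vector_space_over_itself.vector_space_axioms
  by (simp add: Vector_Spaces.linear_iff)

lemma lin_add: "Vector_Spaces.linear (*s) (*) (f :: complex ^ 'a::finite \<Rightarrow> complex) \<Longrightarrow> f (x + y) = f x + f y"
  by (simp add: Vector_Spaces.linear_iff)
lemma lin_scale: "Vector_Spaces.linear (*s) (*) (f :: complex ^ 'a::finite \<Rightarrow> complex) \<Longrightarrow> f (c *s x) = c * f x"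
  by (simp add: Vector_Spaces.linear_iff)
lemma lin_zero: "Vector_Spaces.linear (*s) (*) (f :: complex ^ 'a::finite \<Rightarrow> complex) \<Longrightarrow> f 0 = 0"
  using lin_scale[of f 0 0] by simp
lemma lin_sum: "Vector_Spaces.linear (*s) (*) (f :: complex ^ 'a::finite \<Rightarrow> complex) \<Longrightarrow> f (sum F S) = (\<Sum>x\<in>S. f (F x))"
  by (induct S rule: infinite_finite_induct) (simp_all add: lin_add lin_zero)

lemma m01: "(x::complex) * (if c then 1 else 0) = (if c then x else 0)" by simp

lemma vec_expand: "(\<Sum>j\<in>UNIV. (w::complex^'a::finite) $ j *s axis j 1) = w"
  by (simp add: vec_eq_iff sum_component axis_def m01 eq_commute[of _ "_::'a"])

lemma mat_vec_outer: "mat_vec (outer a b) w = (\<Sum>j\<in>UNIV. b $ j * w $ j) *s a"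
  by (simp add: vec_eq_iff mat_vec_def outer_def sum_distrib_left mult_ac)

lemma mat_vec_add: "mat_vec (A + B) w = mat_vec A w + mat_vec B w"
  by (simp add: vec_eq_iff mat_vec_def distrib_right sum.distrib)
lemma mat_vec_scale: "mat_vec (c *s A) w = c *s mat_vec A w"
  by (simp add: vec_eq_iff mat_vec_def sum_distrib_left mult_ac)
lemma mat_vec_sum: "mat_vec (sum F S) w = (\<Sum>x\<in>S. mat_vec (F x) w)"
  by (induct S rule: infinite_finite_induct) (auto simp: mat_vec_add vec_eq_iff mat_vec_def distrib_right sum.distrib)
lemma mat_vec_inj: "(\<And>w. mat_vec A w = mat_vec B w) \<Longrightarrow> A = B"
proof -
  assume h: "\<And>w. mat_vec A w = mat_vec B w"
  show "A = B"
  proof (subst vec_eq_iff, intro allI)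
    fix p :: "'a \<times> 'a"
    have "mat_vec A (axis (snd p) 1) $ fst p = mat_vec B (axis (snd p) 1) $ fst p" using h by simp
    thus "A $ p = B $ p" by (simp add: mat_vec_def axis_def m01 prod.case_eq_if)
  qed
qed
lemma lin_expand: "Vector_Spaces.linear (*s) (*) (g :: complex ^ 'a::finite \<Rightarrow> complex) \<Longrightarrow>
   g w = (\<Sum>j\<in>UNIV. g (axis j 1) * w $ j)"
proof -
  assume l: "Vector_Spaces.linear (*s) (*) g"
  have "g w = g (\<Sum>j\<in>UNIV. w $ j *s axis j 1)" by (simp add: vec_expand)
  also have "\<dots> = (\<Sum>j\<in>UNIV. g (axis j 1) * w $ j)"
    by (simp add: lin_sum[OF l] lin_scale[OF l] mult.commute)
  finally show ?thesis .
qed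

lemma TR_lower:
  assumes "TR U mat_vec r"
  shows "\<exists>M. U \<subseteq> vec.span (M ` {..<r}) \<and> (\<forall>i. \<exists>a b. M i = outer a b)"
proof -
  obtain f g z where lin: "\<forall>i<r. Vector_Spaces.linear (*s) (*) (f i) \<and> Vector_Spaces.linear (*s) (*) (g i)"
    and dec: "\<forall>u\<in>U. \<forall>w. mat_vec u w = (\<Sum>i<r. (f i u * g i w) *s z i)"
    using assms unfolding TR_def by blast
  define M where "M i = outer (z i) (\<chi> j. g i (axis j 1))" for i
  have "A \<in> vec.span (M ` {..<r})" if A: "A \<in> U" for A
  proof -
    have "A = (\<Sum>i<r. f i A *s M i)"
    proof (rule mat_vec_inj)
      fix w
      have "mat_vec (\<Sum>i<r. f i A *s M i) w = (\<Sum>i<r. f i A *s mat_vec (M i) w)"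
        by (simp add: mat_vec_sum mat_vec_scale)
      also have "\<dots> = (\<Sum>i<r. (f i A * g i w) *s z i)"
      proof (rule sum.cong)
        fix i assume "i \<in> {..<r}"
        hence "g i w = (\<Sum>j\<in>UNIV. g i (axis j 1) * w $ j)" using lin lin_expand by auto
        thus "f i A *s mat_vec (M i) w = (f i A * g i w) *s z i"
          by (simp add: M_def mat_vec_outer)
      qed simp
      finally show "mat_vec A w = mat_vec (\<Sum>i<r. f i A *s M i) w" using dec A by simp
    qed
    also have "\<dots> \<in> vec.span (M ` {..<r})"
      by (intro vec.span_sum vec.span_scale vec.span_base) auto
    finally show ?thesis .
  qed
  moreover have "\<forall>i. \<exists>a b. M i = outer a b" unfolding M_def by blast
  ultimately show ?thesis by blast
qed

lemma TR_exists: "TR (U :: (complex ^ ('m::finite \<times> 'm)) set) mat_vec CARD('m \<times> 'm)"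
proof -
  obtain h where h: "bij_betw h {0..<CARD('m \<times> 'm)} (UNIV :: ('m \<times> 'm) set)"
    using ex_bij_betw_nat_finite[of "UNIV :: ('m \<times> 'm) set"] by auto
  have eq: "mat_vec A w = (\<Sum>i<CARD('m \<times> 'm). (A $ h i * w $ snd (h i)) *s axis (fst (h i)) 1)" for A w
  proof -
    have "(\<Sum>i<CARD('m \<times> 'm). (A $ h i * w $ snd (h i)) *s axis (fst (h i)) (1::complex))
        = (\<Sum>p\<in>UNIV. (A $ p * w $ snd p) *s axis (fst p) 1)"
      using sum.reindex_bij_betw[OF h, of "\<lambda>p. (A $ p * w $ snd p) *s axis (fst p) (1::complex)"]
      by (simp add: lessThan_atLeast0)
    also have "\<dots> = mat_vec A w"
    proof (subst vec_eq_iff, intro allI)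
      fix a :: 'm
      have "(\<Sum>p\<in>UNIV. (A $ p * w $ snd p) *s axis (fst p) (1::complex)) $ a
          = (\<Sum>p\<in>UNIV. if fst p = a then A $ p * w $ snd p else 0)"
        unfolding sum_component by (intro sum.cong) (auto simp: axis_def)
      also have "\<dots> = (\<Sum>p\<in>UNIV \<times> UNIV. if fst p = a then A $ p * w $ snd p else 0)"
        by (simp only: UNIV_Times_UNIV)
      also have "\<dots> = (\<Sum>i\<in>UNIV. \<Sum>j\<in>UNIV. if i = a then A $ (i, j) * w $ j else 0)"
        by (subst sum.cartesian_product) (rule sum.cong, auto)
      also have "\<dots> = (\<Sum>i\<in>UNIV. if i = a then (\<Sum>j\<in>UNIV. A $ (i, j) * w $ j) else 0)"
        by (intro sum.cong) auto
      also have "\<dots> = mat_vec A w $ a"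
        by (simp add: mat_vec_def)
      finally show "(\<Sum>p\<in>UNIV. (A $ p * w $ snd p) *s axis (fst p) (1::complex)) $ a = mat_vec A w $ a" .
    qed
    finally show ?thesis by simp
  qed
  show ?thesis unfolding TR_def
    apply (rule exI[of _ "\<lambda>i A. A $ h i"], rule exI[of _ "\<lambda>i w. w $ snd (h i)"],
           rule exI[of _ "\<lambda>i. axis (fst (h i)) 1"])
    using eq by (auto intro!: linI)
qed


lemma rank_basis:
  fixes U :: "(complex ^ ('m::finite \<times> 'm)) set"
  assumes sub: "vec.subspace U" and r: "tensor_rank U mat_vec = vec.dim U"
  shows "\<exists>S. finite S \<and> vec.independent S \<and> vec.span S = U \<and> card S = vec.dim U \<and> (\<forall>M\<in>S. \<exists>a b. M = outer a b)"
proof -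
  have "TR U mat_vec (vec.dim U)"
    using LeastI_ex[of "TR U mat_vec", OF exI[of "TR U mat_vec", OF TR_exists]] r by (simp add: tensor_rank_TR)
  then obtain M where M: "U \<subseteq> vec.span (M ` {..<vec.dim U})" "\<forall>i. \<exists>a b. M i = outer a b"
    using TR_lower by blast
  define S where "S = M ` {..<vec.dim U}"
  have fin: "finite S" unfolding S_def by simp
  have c1: "card S \<le> vec.dim U" unfolding S_def using card_image_le by fastforce
  have c2: "vec.dim U \<le> card S" using vec.dim_le_card[OF M(1)[folded S_def] fin] .
  have c3: "vec.dim (vec.span S) \<le> vec.dim U"
    using vec.dim_le_card[OF vec.span_superset fin] c1 by simp
  have "vec.span U = vec.span (vec.span S)"
    using vec.dim_eq_span[of U "vec.span S"] M(1) S_def c3 by simp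
  hence sp: "vec.span S = U" using sub by (metis vec.span_eq_iff vec.span_span)
  have ind: "vec.independent S"
    using vec.card_eq_dim[of S "vec.span S"] fin c1 c2 sp vec.span_superset by auto
  show ?thesis
    apply (rule exI[of _ S])
    using fin ind sp c1 c2 M(2) S_def by auto
qed

lemma TR_upper:
  fixes K :: "(complex ^ ('m::finite \<times> 'm)) set"
  assumes fin: "finite K" and ind: "vec.independent K" and ro: "\<forall>M\<in>K. \<exists>a b. M = outer a b"
    and U: "U \<subseteq> vec.span K"
  shows "TR U mat_vec (card K)"
proof -
  obtain h where h: "bij_betw h {0..<card K} K"
    using ex_bij_betw_nat_finite[OF fin] by auto
  from ro obtain aa bb where ab: "\<forall>M\<in>K. M = outer (aa M) (bb M)"
    by metis
  define E where "E = vec.extend_basis K"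
  have indE: "vec.independent E" and spE: "vec.span E = UNIV" and KE: "K \<subseteq> E"
    using ind by (auto simp: E_def vec.independent_extend_basis vec.extend_basis_superset)
  define G where "G M w = (\<Sum>j\<in>UNIV. bb M $ j * w $ j)" for M w
  have linG: "Vector_Spaces.linear (*s) (*) (G M)" for M
    by (rule linI) (simp_all add: G_def distrib_left sum.distrib sum_distrib_left mult_ac)
  have dec: "mat_vec A w = (\<Sum>i<card K. (vec.representation E A (h i) * G (h i) w) *s aa (h i))"
    if A: "A \<in> U" for A w
  proof -
    have AK: "A \<in> vec.span K" using A U by auto
    have rep: "vec.representation E A = vec.representation K A"
      using vec.representation_extend[OF indE AK KE] .
    have Aeq: "(\<Sum>b\<in>K. vec.representation K A b *s b) = A"
      using vec.sum_representation_eq[OF ind AK fin] by simp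
    have "mat_vec (\<Sum>b\<in>K. vec.representation K A b *s b) w = (\<Sum>b\<in>K. vec.representation K A b *s mat_vec b w)"
      by (simp add: mat_vec_sum mat_vec_scale)
    hence "mat_vec A w = (\<Sum>b\<in>K. vec.representation K A b *s mat_vec b w)"
      by (simp only: Aeq)
    also have "\<dots> = (\<Sum>b\<in>K. (vec.representation K A b * G b w) *s aa b)"
    proof (rule sum.cong)
      fix b assume "b \<in> K"
      hence "mat_vec b w = G b w *s aa b" using ab mat_vec_outer unfolding G_def by metis
      thus "vec.representation K A b *s mat_vec b w = (vec.representation K A b * G b w) *s aa b" by simp
    qed simp
    also have "\<dots> = (\<Sum>i<card K. (vec.representation E A (h i) * G (h i) w) *s aa (h i))"
      using sum.reindex_bij_betw[OF h, of "\<lambda>b. (vec.representation K A b * G b w) *s aa b"]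
      by (simp add: lessThan_atLeast0 rep)
    finally show ?thesis .
  qed
  show ?thesis unfolding TR_def
    apply (rule exI[of _ "\<lambda>i A. vec.representation E A (h i)"], rule exI[of _ "\<lambda>i. G (h i)"],
           rule exI[of _ "\<lambda>i. aa (h i)"])
    using dec linG vec.linear_representation[OF indE spE] by blast
qed


lemma kron_outer: "kron (outer a b) (outer c d) = outer (\<chi> p. a $ fst p * c $ snd p) (\<chi> p. b $ fst p * d $ snd p)"
  by (simp add: vec_eq_iff kron_def outer_def mult_ac)

lemma kron_add1: "kron (A + A') B = kron A B + kron A' B"
  by (simp add: vec_eq_iff kron_def distrib_right)
lemma kron_scale1: "kron (c *s A) B = c *s kron A B"
  by (simp add: vec_eq_iff kron_def mult_ac)
lemma kron_zero1: "kron 0 B = 0"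
  by (simp add: vec_eq_iff kron_def)
lemma kron_add2: "kron A (B + B') = kron A B + kron A B'"
  by (simp add: vec_eq_iff kron_def distrib_left)
lemma kron_scale2: "kron A (c *s B) = c *s kron A B"
  by (simp add: vec_eq_iff kron_def mult_ac)
lemma kron_zero2: "kron A 0 = 0"
  by (simp add: vec_eq_iff kron_def)

lemma kron_indep:
  fixes SU :: "(complex ^ ('n::finite \<times> 'n)) set" and SV :: "(complex ^ ('k::finite \<times> 'k)) set"
  assumes iU: "vec.independent SU" and iV: "vec.independent SV"
    and fU: "finite SU" and fV: "finite SV"
    and z: "(\<Sum>p\<in>SU \<times> SV. c p *s kron (fst p) (snd p)) = 0"
  shows "\<forall>p\<in>SU \<times> SV. c p = 0"
proof -
  have e: "(\<Sum>a\<in>SU. \<Sum>b\<in>SV. c (a, b) * (a $ (i, i') * b $ (j, j'))) = 0" for i i' j j'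
  proof -
    have "(\<Sum>p\<in>SU \<times> SV. c p *s kron (fst p) (snd p)) $ ((i, j), (i', j')) = 0" using z by simp
    thus ?thesis by (simp add: sum_component kron_def sum.cartesian_product split_def)
  qed
  have s1: "(\<Sum>b\<in>SV. c (a, b) * b $ (j, j')) = 0" if a: "a \<in> SU" for a j j'
  proof -
    define d where "d a = (\<Sum>b\<in>SV. c (a, b) * b $ (j, j'))" for a
    have "(\<Sum>a\<in>SU. d a *s a) = 0"
    proof (subst vec_eq_iff, intro allI)
      fix q :: "'n \<times> 'n"
      have "(\<Sum>a\<in>SU. d a *s a) $ q = (\<Sum>a\<in>SU. \<Sum>b\<in>SV. c (a, b) * (a $ (fst q, snd q) * b $ (j, j')))"
        by (simp add: sum_component d_def sum_distrib_left sum_distrib_right mult_ac)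
      also have "\<dots> = 0" by (rule e)
      finally show "(\<Sum>a\<in>SU. d a *s a) $ q = 0 $ q" by simp
    qed
    hence "d a = 0" using iU a unfolding vec.independent_explicit by blast
    thus ?thesis by (simp add: d_def)
  qed
  show ?thesis
  proof
    fix p assume p: "p \<in> SU \<times> SV"
    obtain a b where pab: "p = (a, b)" "a \<in> SU" "b \<in> SV" using p by auto
    have h1: "(\<Sum>b\<in>SV. c (a, b) *s b) = 0"
      using s1[OF pab(2)] by (simp add: vec_eq_iff sum_component)
    have h2: "\<forall>cc. (\<Sum>v\<in>SV. cc v *s v) = 0 \<longrightarrow> (\<forall>v\<in>SV. cc v = 0)"
      using iV unfolding vec.independent_explicit by blast
    have "\<forall>v\<in>SV. c (a, v) = 0" using h2[rule_format, of "\<lambda>v. c (a, v)"] h1 by simp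
    hence "c (a, b) = 0" using pab(3) by blast
    thus "c p = 0" using pab by simp
  qed
qed


lemma kron_K:
  fixes SU :: "(complex ^ ('n::finite \<times> 'n)) set" and SV :: "(complex ^ ('k::finite \<times> 'k)) set"
  assumes iU: "vec.independent SU" and iV: "vec.independent SV"
    and fU: "finite SU" and fV: "finite SV"
  shows "inj_on (\<lambda>p. kron (fst p) (snd p)) (SU \<times> SV)"
    and "vec.independent ((\<lambda>p. kron (fst p) (snd p)) ` (SU \<times> SV))"
proof -
  let ?k = "\<lambda>p. kron (fst p) (snd p)"
  show inj: "inj_on ?k (SU \<times> SV)"
  proof (rule inj_onI, rule ccontr)
    fix p q assume p: "p \<in> SU \<times> SV" and q: "q \<in> SU \<times> SV" and eq: "?k p = ?k q" and ne: "p \<noteq> q"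
    define c where "c r = (if r = p then 1 else if r = q then -1 else (0::complex))" for r
    have "(\<Sum>r\<in>SU \<times> SV. c r *s ?k r) = (\<Sum>r\<in>SU \<times> SV. (if r = p then ?k r else 0) + (if r = q then - ?k r else 0))"
      by (rule sum.cong) (auto simp: c_def ne)
    also have "\<dots> = ?k p - ?k q"
      using p q by (simp add: sum.distrib sum.delta' fU fV)
    also have "\<dots> = 0" using eq by simp
    finally have "\<forall>r\<in>SU \<times> SV. c r = 0" using kron_indep[OF iU iV fU fV] by blast
    hence "c p = 0" using p by blast
    thus False by (simp add: c_def)
  qed
  show "vec.independent (?k ` (SU \<times> SV))"
    unfolding vec.independent_explicit
  proof (intro conjI allI impI ballI)
    show "finite (?k ` (SU \<times> SV))" using fU fV by simp
    fix u v assume z: "(\<Sum>v\<in>?k ` (SU \<times> SV). u v *s v) = 0" and v: "v \<in> ?k ` (SU \<times> SV)"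
    have "(\<Sum>r\<in>SU \<times> SV. u (?k r) *s ?k r) = 0"
      using z sum.reindex[OF inj, of "\<lambda>v. u v *s v"] by simp
    hence "\<forall>r\<in>SU \<times> SV. u (?k r) = 0" using kron_indep[OF iU iV fU fV, of "\<lambda>r. u (?k r)"] by simp
    thus "u v = 0" using v by auto
  qed
qed

lemma kron_span:
  fixes SU :: "(complex ^ ('n::finite \<times> 'n)) set" and SV :: "(complex ^ ('k::finite \<times> 'k)) set"
  shows "kron_space (vec.span SU) (vec.span SV) = vec.span ((\<lambda>p. kron (fst p) (snd p)) ` (SU \<times> SV))"
proof -
  let ?K = "(\<lambda>p. kron (fst p) (snd p)) ` (SU \<times> SV)"
  have base: "kron a B \<in> vec.span ?K" if a: "a \<in> SU" and B: "B \<in> vec.span SV" for a B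
    using B
  proof (induct rule: vec.span_induct)
    case base
    show ?case by (auto simp: vec.subspace_def kron_zero2 kron_add2 kron_scale2 vec.span_zero
        vec.span_add vec.span_scale)
  next
    case (step b)
    thus ?case using a by (intro vec.span_base) (auto intro: image_eqI[of _ _ "(a, b)"])
  qed
  have main: "\<forall>B\<in>vec.span SV. kron A B \<in> vec.span ?K" if A: "A \<in> vec.span SU" for A
    using A
  proof (induct rule: vec.span_induct)
    case base
    show ?case by (auto simp: vec.subspace_def kron_zero1 kron_add1 kron_scale1 vec.span_zero
        vec.span_add vec.span_scale)
  next
    case (step a)
    thus ?case using base by blast
  qed
  have s1: "{kron A B |A B. A \<in> vec.span SU \<and> B \<in> vec.span SV} \<subseteq> vec.span ?K"
    using main by blast
  have s2: "?K \<subseteq> {kron A B |A B. A \<in> vec.span SU \<and> B \<in> vec.span SV}"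
  proof
    fix x assume "x \<in> ?K"
    then obtain a b where ab: "a \<in> SU" "b \<in> SV" "x = kron a b" by auto
    have "a \<in> vec.span SU" "b \<in> vec.span SV" using ab vec.span_base by auto
    thus "x \<in> {kron A B |A B. A \<in> vec.span SU \<and> B \<in> vec.span SV}" using ab(3) by blast
  qed
  show ?thesis unfolding kron_space_def
    using vec.span_mono[OF s1] vec.span_mono[OF s2] by (simp add: vec.span_span)
qed


theorem mainTheorem12:
  fixes U :: "(complex ^ ('n::finite \<times> 'n)) set" and V :: "(complex ^ ('k::finite \<times> 'k)) set"
  assumes "vec.subspace U" and "vec.subspace V"
    and "tensor_rank U mat_vec = vec.dim U"
    and "tensor_rank V mat_vec = vec.dim V"
    and "vec.span {mat_vec A x | A x. A \<in> U} = UNIV"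
    and "vec.span {mat_vec B y | B y. B \<in> V} = UNIV"
  shows "tensor_rank (kron_space U V) mat_vec = tensor_rank U mat_vec * tensor_rank V mat_vec"
proof -
  obtain SU where SU: "finite SU" "vec.independent SU" "vec.span SU = U" "card SU = vec.dim U"
      "\<forall>M\<in>SU. \<exists>a b. M = outer a b"
    using rank_basis[OF assms(1,3)] by blast
  obtain SV where SV: "finite SV" "vec.independent SV" "vec.span SV = V" "card SV = vec.dim V"
      "\<forall>M\<in>SV. \<exists>a b. M = outer a b"
    using rank_basis[OF assms(2,4)] by blast
  define K where "K = (\<lambda>p. kron (fst p) (snd p)) ` (SU \<times> SV)"
  have inj: "inj_on (\<lambda>p. kron (fst p) (snd p)) (SU \<times> SV)" and indK: "vec.independent K"
    using kron_K[OF SU(2) SV(2) SU(1) SV(1)] by (auto simp: K_def)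
  have finK: "finite K" using SU(1) SV(1) by (simp add: K_def)
  have cardK: "card K = vec.dim U * vec.dim V"
    using card_image[OF inj] SU(4) SV(4) by (simp add: K_def card_cartesian_product)
  have W: "kron_space U V = vec.span K"
    using kron_span[of SU SV] SU(3) SV(3) by (simp add: K_def)
  have roK: "\<forall>M\<in>K. \<exists>a b. M = outer a b"
  proof
    fix M assume "M \<in> K"
    then obtain A B where AB: "A \<in> SU" "B \<in> SV" "M = kron A B" by (auto simp: K_def)
    obtain a b c d where ab: "A = outer a b" "B = outer c d" using AB SU(5) SV(5) by blast
    show "\<exists>a b. M = outer a b" unfolding AB(3) ab kron_outer by blast
  qed
  have TRK: "TR (kron_space U V) mat_vec (card K)"
    using TR_upper[OF finK indK roK] W by simp
  have le: "tensor_rank (kron_space U V) mat_vec \<le> card K"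
    unfolding tensor_rank_TR using TRK by (rule Least_le)
  have "TR (kron_space U V) mat_vec (tensor_rank (kron_space U V) mat_vec)"
    unfolding tensor_rank_TR using TRK by (rule LeastI)
  then obtain M where M: "kron_space U V \<subseteq> vec.span (M ` {..<tensor_rank (kron_space U V) mat_vec})"
    using TR_lower by blast
  have "vec.dim (kron_space U V) \<le> card (M ` {..<tensor_rank (kron_space U V) mat_vec})"
    using vec.dim_le_card[OF M] by simp
  also have "\<dots> \<le> tensor_rank (kron_space U V) mat_vec"
    using card_image_le[of "{..<tensor_rank (kron_space U V) mat_vec}" M] by simp
  finally have ge: "card K \<le> tensor_rank (kron_space U V) mat_vec"
    using W indK by (simp add: vec.dim_eq_card_independent)
  show ?thesis using le ge cardK assms(3,4) by simp
qed

end
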